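(* Let $G$ be a random $(d_1,d_2)$-biregular bipartite graph with $d_1\geq d_2$ and $d_1=o(n^\epsilon)$ for every $\epsilon>0$. Fix an integer $R$ and let $\tau_1$ be the set of vertices in $V_1$ whose $R$-neighborhood contains no cycle. Then $$\mathbb P\left(\frac{n-|\tau_1|}{n}>n^{-1/4}\right)=o(n^{-5/4}).$$
   Context: A $(d_1,d_2)$-biregular bipartite graph on $V_1=[n]$, $V_2=[m]$ is a simple bipartite graph with degrees $d_1$ on $V_1$ and $d_2$ on $V_2$; a random one is uniform among all such. The $R$-neighborhood of a vertex is the subgraph induced by vertices at graph distance at most $R$ from it. *)

theory Defs
  imports Complex_Main "HOL-Library.Landau_Symbols"
begin

text \<open>A bipartite graph with parts V1 = [n] (encoded as Inl i, i < n) and V2 = [m]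
(encoded as Inr j, j < m) is given by its edge set E \<subseteq> {..<n} \<times> {..<m}.\<close>

definition biregular :: "nat \<Rightarrow> nat \<Rightarrow> nat \<Rightarrow> nat \<Rightarrow> (nat \<times> nat) set \<Rightarrow> bool" where
  "biregular n m d1 d2 E \<longleftrightarrow>
     E \<subseteq> {..<n} \<times> {..<m} \<and>
     (\<forall>i<n. card {j. (i, j) \<in> E} = d1) \<and>
     (\<forall>j<m. card {i. (i, j) \<in> E} = d2)"

definition biregular_graphs :: "nat \<Rightarrow> nat \<Rightarrow> nat \<Rightarrow> nat \<Rightarrow> (nat \<times> nat) set set" where
  "biregular_graphs n m d1 d2 = {E. biregular n m d1 d2 E}"

fun badj :: "(nat \<times> nat) set \<Rightarrow> nat + nat \<Rightarrow> nat + nat \<Rightarrow> bool" where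
  "badj E (Inl i) (Inr j) \<longleftrightarrow> (i, j) \<in> E"
| "badj E (Inr j) (Inl i) \<longleftrightarrow> (i, j) \<in> E"
| "badj E _ _ \<longleftrightarrow> False"

definition within_dist :: "(nat \<times> nat) set \<Rightarrow> nat \<Rightarrow> nat + nat \<Rightarrow> nat + nat \<Rightarrow> bool" where
  "within_dist E R u v \<longleftrightarrow>
     (\<exists>xs. xs \<noteq> [] \<and> hd xs = u \<and> last xs = v \<and> length xs \<le> Suc R \<and>
           (\<forall>k. Suc k < length xs \<longrightarrow> badj E (xs ! k) (xs ! Suc k)))"

definition ball_R :: "(nat \<times> nat) set \<Rightarrow> nat \<Rightarrow> nat + nat \<Rightarrow> (nat + nat) set" where
  "ball_R E R v = {u. within_dist E R v u}"

definition has_cycle_in :: "(nat \<times> nat) set \<Rightarrow> (nat + nat) set \<Rightarrow> bool" where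
  "has_cycle_in E S \<longleftrightarrow>
     (\<exists>cs. 3 \<le> length cs \<and> distinct cs \<and> set cs \<subseteq> S \<and>
           (\<forall>k<length cs. badj E (cs ! k) (cs ! ((Suc k) mod length cs))))"

definition tau1 :: "nat \<Rightarrow> (nat \<times> nat) set \<Rightarrow> nat \<Rightarrow> nat set" where
  "tau1 n E R = {i. i < n \<and> \<not> has_cycle_in E (ball_R E R (Inl i))}"

definition prob_bireg :: "nat \<Rightarrow> nat \<Rightarrow> nat \<Rightarrow> nat \<Rightarrow> ((nat \<times> nat) set \<Rightarrow> bool) \<Rightarrow> real" where
  "prob_bireg n m d1 d2 P =
     real (card {E \<in> biregular_graphs n m d1 d2. P E}) / real (card (biregular_graphs n m d1 d2))"

end

theory Submission
  imports Defs "HOL-Real_Asymp.Real_Asymp"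
begin


lemma badj_sym: "badj E x y = badj E y x"
  by (cases x; cases y) auto

lemma wd_refl: "within_dist E r v v"
  unfolding within_dist_def by (rule exI[of _ "[v]"]) auto

lemma wd_mono: "r \<le> r' \<Longrightarrow> within_dist E r u v \<Longrightarrow> within_dist E r' u v"
  unfolding within_dist_def by (elim exE conjE, intro exI conjI) (assumption | simp)+

lemma wd_step:
  assumes "within_dist E r u v" "badj E v w"
  shows "within_dist E (Suc r) u w"
proof -
  obtain xs where xs: "xs \<noteq> []" "hd xs = u" "last xs = v" "length xs \<le> Suc r"
    "\<forall>k. Suc k < length xs \<longrightarrow> badj E (xs ! k) (xs ! Suc k)"
    using assms(1) unfolding within_dist_def by blast
  have "\<forall>k. Suc k < length (xs @ [w]) \<longrightarrow> badj E ((xs @ [w]) ! k) ((xs @ [w]) ! Suc k)"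
  proof (intro allI impI)
    fix k assume k: "Suc k < length (xs @ [w])"
    show "badj E ((xs @ [w]) ! k) ((xs @ [w]) ! Suc k)"
    proof (cases "Suc k < length xs")
      case True then show ?thesis using xs(5) by (simp add: nth_append)
    next
      case False
      then have "Suc k = length xs" using k by simp
      then have "k = length xs - 1" by simp
      then have "xs ! k = v" using xs(1,3) by (simp add: last_conv_nth)
      then show ?thesis using \<open>Suc k = length xs\<close> assms(2) by (simp add: nth_append)
    qed
  qed
  then show ?thesis unfolding within_dist_def using xs
    by (intro exI[of _ "xs @ [w]"]) auto
qed

lemma wd_0: "within_dist E 0 u v \<Longrightarrow> u = v"
proof -
  assume "within_dist E 0 u v"
  then obtain xs where "xs \<noteq> []" "hd xs = u" "last xs = v" "length xs \<le> 1"
    unfolding within_dist_def by auto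
  then show ?thesis by (cases xs) auto
qed

lemma wd_Suc_cases:
  assumes "within_dist E (Suc r) u w"
  shows "within_dist E r u w \<or> (\<exists>v. within_dist E r u v \<and> badj E v w)"
proof -
  obtain xs where xs: "xs \<noteq> []" "hd xs = u" "last xs = w" "length xs \<le> Suc (Suc r)"
    "\<forall>k. Suc k < length xs \<longrightarrow> badj E (xs ! k) (xs ! Suc k)"
    using assms(1) unfolding within_dist_def by blast
  show ?thesis
  proof (cases "length xs \<le> Suc r")
    case True then show ?thesis using xs unfolding within_dist_def by blast
  next
    case False
    then have len: "length xs = Suc (Suc r)" using xs(4) by simp
    define ys where "ys = butlast xs"
    have ly: "length ys = Suc r" using len by (simp add: ys_def)
    have ysn: "\<And>k. k < length ys \<Longrightarrow> ys ! k = xs ! k" by (simp add: ys_def nth_butlast)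
    have "ys \<noteq> []" using ly by auto
    moreover have "hd ys = u"
    proof -
      have "ys \<noteq> []" using ly by auto
      then have "hd ys = ys ! 0" by (simp add: hd_conv_nth)
      also have "\<dots> = xs ! 0" using ysn[of 0] ly by simp
      also have "\<dots> = u" using xs(1,2) by (simp add: hd_conv_nth)
      finally show ?thesis .
    qed
    moreover have "\<forall>k. Suc k < length ys \<longrightarrow> badj E (ys ! k) (ys ! Suc k)"
      using xs(5) ysn ly len by auto
    ultimately have "within_dist E r u (last ys)" unfolding within_dist_def using ly
      by (intro exI[of _ ys]) auto
    moreover have "last ys = xs ! r"
    proof -
      have "ys \<noteq> []" using ly by auto
      then have "last ys = ys ! r" using ly by (simp add: last_conv_nth)
      then show ?thesis using ysn[of r] ly by simp
    qed
    moreover have "badj E (xs ! r) w" using xs(5)[rule_format, of r] len xs(1,3)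
      by (simp add: last_conv_nth)
    ultimately have "within_dist E r u (xs ! r) \<and> badj E (xs ! r) w" by simp
    then show ?thesis by blast
  qed
qed

lemma wd_Suc_iff:
  "within_dist E (Suc r) u w \<longleftrightarrow> within_dist E r u w \<or> (\<exists>v. within_dist E r u v \<and> badj E v w)"
proof
  assume "within_dist E (Suc r) u w" then show "within_dist E r u w \<or> (\<exists>v. within_dist E r u v \<and> badj E v w)"
    by (rule wd_Suc_cases)
next
  assume "within_dist E r u w \<or> (\<exists>v. within_dist E r u v \<and> badj E v w)"
  then show "within_dist E (Suc r) u w"
  proof
    assume "within_dist E r u w" then show ?thesis by (rule wd_mono[rotated]) simp
  next
    assume "\<exists>v. within_dist E r u v \<and> badj E v w"
    then show ?thesis using wd_step by blast
  qed
qed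

lemma wd_prepend:
  assumes "badj E u u'" "within_dist E r u' v"
  shows "within_dist E (Suc r) u v"
  using assms(2)
proof (induction r arbitrary: v)
  case 0
  then have "v = u'" using wd_0 by blast
  then show ?case using wd_step[OF wd_refl assms(1)] by simp
next
  case (Suc r)
  from wd_Suc_cases[OF Suc.prems] show ?case
  proof
    assume "within_dist E r u' v"
    then show ?thesis using Suc.IH wd_mono[of "Suc r" "Suc (Suc r)"] by simp
  next
    assume "\<exists>w. within_dist E r u' w \<and> badj E w v"
    then obtain w where "within_dist E r u' w" "badj E w v" by blast
    then show ?thesis using Suc.IH wd_step by blast
  qed
qed

lemma wd_sym: "within_dist E r u v \<Longrightarrow> within_dist E r v u"
proof (induction r arbitrary: v)
  case 0 then show ?case using wd_0 wd_refl by metis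
next
  case (Suc r)
  from wd_Suc_cases[OF Suc.prems] show ?case
  proof
    assume "within_dist E r u v"
    then show ?thesis using Suc.IH wd_mono[of r "Suc r"] by simp
  next
    assume "\<exists>w. within_dist E r u w \<and> badj E w v"
    then obtain w where "within_dist E r u w" "badj E w v" by blast
    then obtain w where "within_dist E r w u" "badj E v w" using Suc.IH badj_sym by blast
    then show ?thesis using wd_prepend by blast
  qed
qed

lemma wd_trans: "within_dist E a u v \<Longrightarrow> within_dist E b v w \<Longrightarrow> within_dist E (a + b) u w"
proof (induction b arbitrary: w)
  case 0 then show ?case using wd_0 by fastforce
next
  case (Suc b)
  from wd_Suc_cases[OF Suc.prems(2)] show ?case
  proof
    assume "within_dist E b v w"
    then have "within_dist E (a + b) u w" using Suc by simp
    then show ?thesis using wd_mono[of "a+b" "a + Suc b"] by simp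
  next
    assume "\<exists>x. within_dist E b v x \<and> badj E x w"
    then obtain x where "within_dist E b v x" "badj E x w" by blast
    then show ?thesis using Suc wd_step by (metis add_Suc_right)
  qed
qed


definition dst :: "(nat \<times> nat) set \<Rightarrow> nat + nat \<Rightarrow> nat + nat \<Rightarrow> nat" where
  "dst E v x = (LEAST k. within_dist E k v x)"

definition side :: "nat + nat \<Rightarrow> nat" where
  "side x = (case x of Inl _ \<Rightarrow> 0 | Inr _ \<Rightarrow> 1)"

lemma dst_wd: "within_dist E r v x \<Longrightarrow> within_dist E (dst E v x) v x"
  unfolding dst_def by (rule LeastI)

lemma dst_le: "within_dist E r v x \<Longrightarrow> dst E v x \<le> r"
  unfolding dst_def by (rule Least_le)

lemma badj_side: "badj E x y \<Longrightarrow> side y = 1 - side x \<and> side x \<le> 1"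
  by (cases x; cases y) (auto simp: side_def)

lemma walk_parity:
  assumes "\<forall>k. Suc k < length xs \<longrightarrow> badj E (xs ! k) (xs ! Suc k)" "k < length xs"
  shows "side (xs ! k) = (side (xs ! 0) + k) mod 2"
  using assms(2)
proof (induction k)
  case 0
  have "side (xs ! 0) \<le> 1" by (simp add: side_def split: sum.splits)
  then show ?case by auto
next
  case (Suc k)
  then have "badj E (xs ! k) (xs ! Suc k)" using assms(1) by auto
  then have "side (xs ! Suc k) = 1 - side (xs ! k)" "side (xs ! k) \<le> 1" using badj_side by auto
  then show ?case using Suc by (auto simp: mod_Suc)
qed

lemma dst_parity:
  assumes "within_dist E r v x"
  shows "side x = (side v + dst E v x) mod 2"
proof -
  let ?d = "dst E v x"
  obtain xs where xs: "xs \<noteq> []" "hd xs = v" "last xs = x" "length xs \<le> Suc ?d"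
    "\<forall>k. Suc k < length xs \<longrightarrow> badj E (xs ! k) (xs ! Suc k)"
    using dst_wd[OF assms] unfolding within_dist_def by blast
  have "length xs = Suc ?d"
  proof (rule ccontr)
    assume "length xs \<noteq> Suc ?d"
    have "length xs > 0" using xs(1) by simp
    then have "length xs \<le> Suc (length xs - 1)" "length xs - 1 < ?d" using xs(4) \<open>length xs \<noteq> Suc ?d\<close> by arith+
    then have "within_dist E (length xs - 1) v x" unfolding within_dist_def using xs by blast
    then have "?d \<le> length xs - 1" by (rule dst_le)
    then show False using \<open>length xs - 1 < ?d\<close> by simp
  qed
  then have "x = xs ! ?d" using xs(1,3) by (simp add: last_conv_nth)
  moreover have "v = xs ! 0" using xs(1,2) by (simp add: hd_conv_nth)
  ultimately show ?thesis using walk_parity[OF xs(5), of ?d] \<open>length xs = Suc ?d\<close> by simp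
qed

lemma adj_dst:
  assumes "within_dist E r v x" "badj E x y"
  shows "dst E v y \<le> Suc (dst E v x)" "within_dist E (Suc r) v y"
  using wd_step[OF dst_wd[OF assms(1)] assms(2)] dst_le apply blast
  using wd_step[OF assms] .

lemma adj_dst_neq:
  assumes "within_dist E r v x" "badj E x y"
  shows "dst E v y \<noteq> dst E v x"
proof
  assume eq: "dst E v y = dst E v x"
  have "side y = (side v + dst E v y) mod 2" using dst_parity adj_dst(2)[OF assms] by blast
  moreover have "side x = (side v + dst E v x) mod 2" using dst_parity assms(1) by blast
  ultimately have "side x = side y" using eq by simp
  then show False using badj_side[OF assms(2)] by arith
qed

lemma parent:
  assumes "within_dist E r v x" "dst E v x = Suc k"
  shows "\<exists>p. badj E p x \<and> within_dist E k v p \<and> dst E v p = k"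
proof -
  have w: "within_dist E (Suc k) v x" using dst_wd[OF assms(1)] assms(2) by simp
  have "\<not> within_dist E k v x"
    using dst_le[of E k v x] assms(2) by auto
  then obtain p where p: "within_dist E k v p" "badj E p x" using wd_Suc_cases[OF w] by blast
  have "dst E v p \<le> k" using dst_le[OF p(1)] .
  moreover have "dst E v x \<le> Suc (dst E v p)" using adj_dst(1)[OF p(1,2)] .
  ultimately show ?thesis using p assms(2) by auto
qed

lemma tree_path:
  "\<And>x1 x2. within_dist E R v x1 \<Longrightarrow> within_dist E R v x2 \<Longrightarrow> x1 \<noteq> x2 \<Longrightarrow>
     dst E v x1 = k \<Longrightarrow> dst E v x2 = k \<Longrightarrow>
     \<exists>q. q \<noteq> [] \<and> hd q = x1 \<and> last q = x2 \<and> distinct q \<and> length q \<le> 2 * k + 1 \<and>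
        successively (badj E) q \<and> (\<forall>y\<in>set q. within_dist E R v y \<and> dst E v y \<le> k)"
proof (induction k)
  case 0
  then have "within_dist E 0 v x1" "within_dist E 0 v x2" using dst_wd by metis+
  then show ?case using wd_0 0 by metis
next
  case (Suc k)
  have kR: "Suc k \<le> R" using dst_le[OF Suc.prems(1)] Suc.prems(4) by simp
  obtain p1 where p1: "badj E p1 x1" "within_dist E k v p1" "dst E v p1 = k"
    using parent[OF Suc.prems(1,4)] by blast
  obtain p2 where p2: "badj E p2 x2" "within_dist E k v p2" "dst E v p2 = k"
    using parent[OF Suc.prems(2,5)] by blast
  have p1R: "within_dist E R v p1" using p1(2) kR wd_mono by (metis Suc_leD)
  have p2R: "within_dist E R v p2" using p2(2) kR wd_mono by (metis Suc_leD)
  show ?case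
  proof (cases "p1 = p2")
    case True
    let ?q = "[x1, p1, x2]"
    have "distinct ?q" using Suc.prems(3,4,5) p1(3) True p2(3) by auto
    moreover have "successively (badj E) ?q" using p1(1) p2(1) True badj_sym by auto
    ultimately show ?thesis using Suc.prems p1 p1R by (intro exI[of _ ?q]) auto
  next
    case False
    obtain q where q: "q \<noteq> []" "hd q = p1" "last q = p2" "distinct q" "length q \<le> 2 * k + 1"
      "successively (badj E) q" "\<forall>y\<in>set q. within_dist E R v y \<and> dst E v y \<le> k"
      using Suc.IH[OF p1R p2R False p1(3) p2(3)] by blast
    let ?q = "x1 # q @ [x2]"
    have "x1 \<notin> set q" "x2 \<notin> set q" using q(7) Suc.prems(4,5) by auto
    then have "distinct ?q" using q(4) Suc.prems(3) by auto
    moreover have "successively (badj E) ?q"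
      using q(1,2,3,6) p1(1) p2(1) badj_sym
      by (auto simp: successively_append_iff successively_Cons)
    ultimately show ?thesis using Suc.prems q by (intro exI[of _ ?q]) auto
  qed
qed

lemma cycle_nbrs:
  assumes "3 \<le> length cs" "distinct cs" "j < length cs"
  shows "cs ! (Suc j mod length cs) \<noteq> cs ! ((j + length cs - 1) mod length cs)"
proof -
  let ?l = "length cs"
  have "Suc j mod ?l \<noteq> (j + ?l - 1) mod ?l"
  proof (cases "Suc j < ?l")
    case True
    then have a: "Suc j mod ?l = Suc j" by simp
    show ?thesis
    proof (cases "j = 0")
      case True then show ?thesis using a assms(1) by simp
    next
      case False
      then have "j + ?l - 1 = (j - 1) + ?l" by simp
      then have "(j + ?l - 1) mod ?l = (j - 1) mod ?l" by simp
      then have "(j + ?l - 1) mod ?l = j - 1" using assms(3) by simp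
      then show ?thesis using a False by simp
    qed
  next
    case False
    then have "Suc j = ?l" using assms(3) by simp
    then have "Suc j mod ?l = 0" "(j + ?l - 1) mod ?l = j - 1" using assms(1)
      by (simp_all add: mod_if)
    then show ?thesis using \<open>Suc j = ?l\<close> assms(1) by simp
  qed
  moreover have "Suc j mod length cs < length cs" "(j + length cs - 1) mod length cs < length cs"
    using assms(1) by (intro mod_less_divisor; linarith)+
  ultimately show ?thesis using nth_eq_iff_index_eq[OF assms(2)] by metis
qed

lemma cycle_pred:
  assumes "3 \<le> length cs" "j < length cs"
  shows "Suc ((j + length cs - 1) mod length cs) mod length cs = j"
proof -
  have "Suc ((j + length cs - 1) mod length cs) mod length cs = Suc (j + length cs - 1) mod length cs"
    by (simp add: mod_Suc_eq)
  also have "Suc (j + length cs - 1) = j + length cs" using assms by simp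
  finally show ?thesis using assms by simp
qed

lemma short_cycle:
  assumes "has_cycle_in E (ball_R E R v)"
  shows "\<exists>c. 3 \<le> length c \<and> length c \<le> 2 * R \<and> distinct c \<and>
             (\<forall>k<length c. badj E (c ! k) (c ! (Suc k mod length c))) \<and> set c \<subseteq> ball_R E R v"
proof -
  obtain cs where cs: "3 \<le> length cs" "distinct cs" "set cs \<subseteq> ball_R E R v"
    "\<forall>k<length cs. badj E (cs ! k) (cs ! (Suc k mod length cs))"
    using assms unfolding has_cycle_in_def by blast
  let ?l = "length cs"
  let ?d = "dst E v"
  have inb: "\<And>y. y \<in> set cs \<Longrightarrow> within_dist E R v y" using cs(3) unfolding ball_R_def by auto
  define M where "M = Max (?d ` set cs)"
  have "M \<in> ?d ` set cs" unfolding M_def using cs(1) by (intro Max_in) auto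
  then obtain u where u: "u \<in> set cs" "?d u = M" by auto
  have umax: "\<And>y. y \<in> set cs \<Longrightarrow> ?d y \<le> ?d u" using u unfolding M_def by simp
  obtain j where j: "j < ?l" "cs ! j = u" using u(1) by (auto simp: in_set_conv_nth)
  define w1 where "w1 = cs ! (Suc j mod ?l)"
  define w2 where "w2 = cs ! ((j + ?l - 1) mod ?l)"
  have w1s: "w1 \<in> set cs" unfolding w1_def by (rule nth_mem, rule mod_less_divisor) (use cs(1) in linarith)
  have w2s: "w2 \<in> set cs" unfolding w2_def by (rule nth_mem, rule mod_less_divisor) (use cs(1) in linarith)
  have a1: "badj E u w1" using cs(4) j unfolding w1_def by auto
  have "(j + ?l - 1) mod ?l < ?l" using cs(1) by (intro mod_less_divisor) linarith
  then have "badj E w2 u" using cs(4)[rule_format, of "(j + ?l - 1) mod ?l"] cycle_pred[OF cs(1) j(1)] j(2)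
    unfolding w2_def by simp
  then have a2: "badj E u w2" using badj_sym by metis
  have ne: "w1 \<noteq> w2" unfolding w1_def w2_def using cycle_nbrs[OF cs(1,2) j(1)] .
  have d1: "?d w1 \<le> ?d u" "?d w1 \<noteq> ?d u" "?d u \<le> Suc (?d w1)"
    using umax[OF w1s] adj_dst_neq[OF inb[OF u(1)] a1] adj_dst(1)[OF inb[OF w1s]] a1 badj_sym by metis+
  have d2: "?d w2 \<le> ?d u" "?d w2 \<noteq> ?d u" "?d u \<le> Suc (?d w2)"
    using umax[OF w2s] adj_dst_neq[OF inb[OF u(1)] a2] adj_dst(1)[OF inb[OF w2s]] a2 badj_sym by metis+
  obtain k where k: "?d u = Suc k" "?d w1 = k" "?d w2 = k" using d1 d2
    by (metis Suc_le_eq le_antisym le_neq_implies_less not_less_eq_eq)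
  obtain q where q: "q \<noteq> []" "hd q = w1" "last q = w2" "distinct q" "length q \<le> 2 * k + 1"
      "successively (badj E) q" "\<forall>y\<in>set q. within_dist E R v y \<and> dst E v y \<le> k"
    using tree_path[OF inb[OF w1s] inb[OF w2s] ne k(2,3)] by blast
  let ?c = "u # q"
  have "length q \<noteq> 1" using q(1,2,3) ne by (cases q) auto
  moreover have "length q \<noteq> 0" using q(1) by simp
  ultimately have "length q \<ge> 2" by arith
  then have l3: "3 \<le> length ?c" by simp
  have kR: "Suc k \<le> R" using dst_le[OF inb[OF u(1)]] k(1) by simp
  have "u \<notin> set q" using q(7) k(1) by auto
  then have dc: "distinct ?c" using q(4) by simp
  have cyc: "\<forall>i<length ?c. badj E (?c ! i) (?c ! (Suc i mod length ?c))"
  proof (intro allI impI)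
    fix i assume i: "i < length ?c"
    show "badj E (?c ! i) (?c ! (Suc i mod length ?c))"
    proof (cases "Suc i < length ?c")
      case True
      have "successively (badj E) ?c" using q(1,2,6) a1 by (simp add: successively_Cons)
      then show ?thesis using True successively_nth by fastforce
    next
      case False
      then have "Suc i = length ?c" using i by simp
      then have "?c ! i = last q" using q(1) by (simp add: last_conv_nth)
      then show ?thesis using \<open>Suc i = length ?c\<close> q(3) a2 badj_sym by simp
    qed
  qed
  have "set ?c \<subseteq> ball_R E R v" using u(1) cs(3) q(7) unfolding ball_R_def by auto
  moreover have "length ?c \<le> 2 * R" using q(5) kR by simp
  ultimately show ?thesis using l3 dc cyc by blast
qed


lemma ball_Suc: "ball_R E (Suc r) v = ball_R E r v \<union> (\<Union>x\<in>ball_R E r v. {y. badj E x y})"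
  unfolding ball_R_def using wd_Suc_iff by blast

lemma ball_0: "ball_R E 0 v = {v}"
  unfolding ball_R_def using wd_0 wd_refl by blast

lemma ball_card:
  assumes nb: "\<And>x. finite {y. badj E x y} \<and> card {y. badj E x y} \<le> d"
  shows "finite (ball_R E r v) \<and> card (ball_R E r v) \<le> (1 + d) ^ r"
proof (induction r)
  case 0 then show ?case by (simp add: ball_0)
next
  case (Suc r)
  let ?B = "ball_R E r v"
  have fin: "finite (ball_R E (Suc r) v)" using Suc nb by (simp add: ball_Suc)
  have "card (ball_R E (Suc r) v) \<le> card ?B + card (\<Union>x\<in>?B. {y. badj E x y})"
    unfolding ball_Suc by (rule card_Un_le)
  also have "card (\<Union>x\<in>?B. {y. badj E x y}) \<le> (\<Sum>x\<in>?B. card {y. badj E x y})"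
    by (rule card_UN_le) (use Suc in blast)
  also have "\<dots> \<le> (\<Sum>x\<in>?B. d)" by (rule sum_mono) (use nb in blast)
  also have "\<dots> = card ?B * d" by simp
  finally have "card (ball_R E (Suc r) v) \<le> card ?B * (1 + d)" by (simp add: algebra_simps)
  also have "\<dots> \<le> (1 + d) ^ r * (1 + d)" using Suc by (intro mult_right_mono) auto
  finally show ?case using fin by (simp add: mult.commute)
qed

lemma biregular_nbrs:
  assumes "biregular n m d1 d2 E" "d2 \<le> d1"
  shows "finite {y. badj E x y} \<and> card {y. badj E x y} \<le> d1"
proof (cases x)
  case (Inl i)
  have eq: "{y. badj E x y} = Inr ` {j. (i, j) \<in> E}"
    unfolding Inl by (auto elim: badj.elims)
  have sub: "{j. (i, j) \<in> E} \<subseteq> {..<m}" using assms(1) unfolding biregular_def by auto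
  have fin: "finite {j. (i, j) \<in> E}" using finite_subset[OF sub] by simp
  have "card {j. (i, j) \<in> E} \<le> d1"
  proof (cases "i < n")
    case True then show ?thesis using assms(1) unfolding biregular_def by simp
  next
    case False
    then have "{j. (i, j) \<in> E} = {}" using assms(1) unfolding biregular_def by auto
    then show ?thesis by simp
  qed
  then show ?thesis unfolding eq using fin by (simp add: card_image)
next
  case (Inr j)
  have eq: "{y. badj E x y} = Inl ` {i. (i, j) \<in> E}"
    unfolding Inr by (auto elim: badj.elims)
  have sub: "{i. (i, j) \<in> E} \<subseteq> {..<n}" using assms(1) unfolding biregular_def by auto
  have fin: "finite {i. (i, j) \<in> E}" using finite_subset[OF sub] by simp
  have "card {i. (i, j) \<in> E} \<le> d2"
  proof (cases "j < m")
    case True then show ?thesis using assms(1) unfolding biregular_def by simp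
  next
    case False
    then have "{i. (i, j) \<in> E} = {}" using assms(1) unfolding biregular_def by auto
    then show ?thesis by simp
  qed
  then show ?thesis unfolding eq using fin assms(2) by (simp add: card_image)
qed

definition cyc :: "(nat \<times> nat) set \<Rightarrow> (nat + nat) list \<Rightarrow> bool" where
  "cyc E c \<longleftrightarrow> (\<forall>k<length c. badj E (c ! k) (c ! (Suc k mod length c)))"

lemma cyc_reach:
  assumes "cyc E c" "k < length c"
  shows "within_dist E k (c ! 0) (c ! k)"
  using assms(2)
proof (induction k)
  case 0 show ?case by (rule wd_refl)
next
  case (Suc k)
  then have "badj E (c ! k) (c ! Suc k)" using assms(1) unfolding cyc_def
    by (metis Suc_lessD mod_less)
  then show ?case using Suc wd_step by simp
qed

lemma cyc_reach2:
  assumes "cyc E c" "x \<in> set c" "y \<in> set c"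
  shows "within_dist E (2 * length c) x y"
proof -
  obtain a b where ab: "a < length c" "b < length c" "x = c ! a" "y = c ! b"
    using assms(2,3) by (auto simp: in_set_conv_nth)
  have "within_dist E a (c ! 0) x" "within_dist E b (c ! 0) y" using cyc_reach[OF assms(1)] ab by auto
  then have "within_dist E (a + b) x y" using wd_sym wd_trans by blast
  then show ?thesis by (rule wd_mono[rotated]) (use ab in simp)
qed

lemma sum_pow_le:
  fixes b B :: nat
  assumes "b \<le> B" "1 \<le> B"
  shows "(\<Sum>i\<le>L. b ^ i) \<le> (L + 1) * B ^ L"
proof -
  have "(\<Sum>i\<le>L. b ^ i) \<le> (\<Sum>i\<le>L. B ^ L)"
  proof (rule sum_mono)
    fix i assume "i \<in> {..L}"
    then have "b ^ i \<le> B ^ i" "B ^ i \<le> B ^ L" using assms by (auto intro: power_mono power_increasing)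
    then show "b ^ i \<le> B ^ L" by simp
  qed
  then show ?thesis by simp
qed

definition scyc :: "(nat \<times> nat) set \<Rightarrow> nat \<Rightarrow> (nat + nat) list set" where
  "scyc E L = {c. 3 \<le> length c \<and> length c \<le> L \<and> distinct c \<and> cyc E c}"

lemma scyc_meet:
  assumes nb: "\<And>x. finite {y. badj E x y} \<and> card {y. badj E x y} \<le> d"
    and c: "c \<in> scyc E L"
  shows "finite {c'\<in>scyc E L. set c \<inter> set c' \<noteq> {}} \<and>
         card {c'\<in>scyc E L. set c \<inter> set c' \<noteq> {}} \<le> (L + 1) * (1 + d) ^ (4 * L * L)"
proof -
  let ?B = "ball_R E (4 * L) (hd c)"
  have sub: "{c'\<in>scyc E L. set c \<inter> set c' \<noteq> {}} \<subseteq> {xs. set xs \<subseteq> ?B \<and> length xs \<le> L}"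
  proof
    fix c' assume "c' \<in> {c'\<in>scyc E L. set c \<inter> set c' \<noteq> {}}"
    then have c': "c' \<in> scyc E L" "set c \<inter> set c' \<noteq> {}" by auto
    have len: "length c' \<le> L" using c' unfolding scyc_def by simp
    have "set c' \<subseteq> ?B"
    proof
      fix y assume y: "y \<in> set c'"
      obtain x where x: "x \<in> set c" "x \<in> set c'" using c'(2) by auto
      have cc: "cyc E c" "length c \<le> L" "c \<noteq> []" using c unfolding scyc_def by auto
      have cc': "cyc E c'" "length c' \<le> L" using c' unfolding scyc_def by auto
      have "within_dist E (2 * length c) (hd c) x" using cyc_reach2[OF cc(1) _ x(1)] cc(3) by simp
      then have h1: "within_dist E (2 * L) (hd c) x" by (rule wd_mono[rotated]) (use cc in simp)
      have "within_dist E (2 * length c') x y" using cyc_reach2[OF cc'(1) x(2) y] .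
      then have h2: "within_dist E (2 * L) x y" by (rule wd_mono[rotated]) (use cc' in simp)
      have "within_dist E (2 * L + 2 * L) (hd c) y" using wd_trans[OF h1 h2] .
      then show "y \<in> ?B" unfolding ball_R_def by simp
    qed
    then show "c' \<in> {xs. set xs \<subseteq> ?B \<and> length xs \<le> L}" using len by simp
  qed
  have bc: "finite ?B" "card ?B \<le> (1 + d) ^ (4 * L)" using ball_card[OF nb] by auto
  have fin: "finite {xs. set xs \<subseteq> ?B \<and> length xs \<le> L}" using finite_lists_length_le[OF bc(1)] .
  have "card {c'\<in>scyc E L. set c \<inter> set c' \<noteq> {}} \<le> card {xs. set xs \<subseteq> ?B \<and> length xs \<le> L}"
    by (rule card_mono[OF fin sub])
  also have "\<dots> = (\<Sum>i\<le>L. card ?B ^ i)" by (rule card_lists_length_le[OF bc(1)])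
  also have "\<dots> \<le> (L + 1) * ((1 + d) ^ (4 * L)) ^ L" by (rule sum_pow_le) (use bc in auto)
  also have "\<dots> = (L + 1) * (1 + d) ^ (4 * L * L)" by (simp add: power_mult)
  finally show ?thesis using finite_subset[OF sub fin] by simp
qed


lemma bireg_sub: "biregular n m d1 d2 E \<Longrightarrow> E \<subseteq> {..<n} \<times> {..<m}"
  unfolding biregular_def by simp

lemma bireg_finite: "biregular n m d1 d2 E \<Longrightarrow> finite E"
  by (rule finite_subset[OF bireg_sub]) auto

lemma bireg_row: "biregular n m d1 d2 E \<Longrightarrow> i < n \<Longrightarrow> card {j. (i, j) \<in> E} = d1"
  unfolding biregular_def by simp

lemma bireg_col: "biregular n m d1 d2 E \<Longrightarrow> j < m \<Longrightarrow> card {i. (i, j) \<in> E} = d2"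
  unfolding biregular_def by simp

lemma bireg_row_fin: "biregular n m d1 d2 E \<Longrightarrow> finite {j. (i, j) \<in> E}"
  by (rule finite_subset[of _ "{..<m}"]) (auto dest: bireg_sub)

lemma bireg_col_fin: "biregular n m d1 d2 E \<Longrightarrow> finite {i. (i, j) \<in> E}"
  by (rule finite_subset[of _ "{..<n}"]) (auto dest: bireg_sub)

lemma bireg_card: "biregular n m d1 d2 E \<Longrightarrow> card E = n * d1"
proof -
  assume b: "biregular n m d1 d2 E"
  have "E = (SIGMA i:{..<n}. {j. (i, j) \<in> E})" using bireg_sub[OF b] by auto
  then have "card E = (\<Sum>i<n. card {j. (i, j) \<in> E})"
    using card_SigmaI[of "{..<n}" "\<lambda>i. {j. (i, j) \<in> E}"] bireg_row_fin[OF b] by simp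
  also have "\<dots> = (\<Sum>i<n. d1)" using bireg_row[OF b] by simp
  finally show ?thesis by simp
qed

lemma finite_graphs: "finite (biregular_graphs n m d1 d2)"
proof -
  have "biregular_graphs n m d1 d2 \<subseteq> Pow ({..<n} \<times> {..<m})"
    unfolding biregular_graphs_def by (force dest: bireg_sub)
  then show ?thesis by (rule finite_subset) simp
qed

lemma card_swap1: "finite S \<Longrightarrow> y \<in> S \<Longrightarrow> z \<notin> S \<Longrightarrow> card (insert z (S - {y})) = card S"
  by (simp add: card_Diff_singleton) (metis One_nat_def Suc_pred card_gt_0_iff empty_iff)

definition sw :: "nat \<Rightarrow> nat \<Rightarrow> (nat \<times> nat) set \<Rightarrow> nat \<Rightarrow> nat \<Rightarrow> (nat \<times> nat) set" where
  "sw i j E a b = (E - {(i, j), (a, b)}) \<union> {(i, b), (a, j)}"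

lemma sw_bireg:
  assumes b: "biregular n m d1 d2 E" and ij: "(i, j) \<in> E" and ab: "(a, b) \<in> E"
    and ne: "a \<noteq> i" "b \<noteq> j" and no: "(i, b) \<notin> E" "(a, j) \<notin> E"
  shows "biregular n m d1 d2 (sw i j E a b)"
proof -
  let ?E' = "sw i j E a b"
  have rng: "i < n" "j < m" "a < n" "b < m" using bireg_sub[OF b] ij ab by auto
  have "j \<in> {y. (i, y) \<in> E}" using ij by simp
  then have "card {y. (i, y) \<in> E} > 0" using bireg_row_fin[OF b] card_gt_0_iff by blast
  then have d1p: "d1 > 0" using bireg_row[OF b rng(1)] by simp
  have "i \<in> {x. (x, j) \<in> E}" using ij by simp
  then have "card {x. (x, j) \<in> E} > 0" using bireg_col_fin[OF b] card_gt_0_iff by blast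
  then have d2p: "d2 > 0" using bireg_col[OF b rng(2)] by simp
  have row: "\<And>x. {y. (x, y) \<in> ?E'} = (if x = i then insert b ({y. (i, y) \<in> E} - {j})
      else if x = a then insert j ({y. (a, y) \<in> E} - {b}) else {y. (x, y) \<in> E})"
    unfolding sw_def using ne by auto
  have col: "\<And>y. {x. (x, y) \<in> ?E'} = (if y = j then insert a ({x. (x, j) \<in> E} - {i})
      else if y = b then insert i ({x. (x, b) \<in> E} - {a}) else {x. (x, y) \<in> E})"
    unfolding sw_def using ne by auto
  have "?E' \<subseteq> {..<n} \<times> {..<m}" unfolding sw_def using bireg_sub[OF b] rng by auto
  moreover have "\<forall>x<n. card {y. (x, y) \<in> ?E'} = d1"
  proof (intro allI impI)
    fix x assume x: "x < n"
    show "card {y. (x, y) \<in> ?E'} = d1"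
      unfolding row using x ij ab no ne bireg_row[OF b] bireg_row_fin[OF b] d1p by auto
  qed
  moreover have "\<forall>y<m. card {x. (x, y) \<in> ?E'} = d2"
  proof (intro allI impI)
    fix y assume y: "y < m"
    show "card {x. (x, y) \<in> ?E'} = d2"
      unfolding col using y ij ab no ne bireg_col[OF b] bireg_col_fin[OF b] d2p by auto
  qed
  ultimately show ?thesis unfolding biregular_def by blast
qed

definition good :: "nat \<Rightarrow> nat \<Rightarrow> (nat \<times> nat) set \<Rightarrow> (nat \<times> nat) set \<Rightarrow> (nat \<times> nat) set" where
  "good i j F E = {(a, b) \<in> E. a \<noteq> i \<and> b \<noteq> j \<and> (i, b) \<notin> E \<and> (a, j) \<notin> E \<and> (a, b) \<notin> F}"

lemma good_card:
  assumes b: "biregular n m d1 d2 E" and ij: "(i, j) \<in> E" and F: "finite F" "card F \<le> K"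
  shows "n * d1 \<le> card (good i j F E) + (d1 + d2 + 2 * d1 * d2 + K)"
proof -
  let ?row = "\<lambda>x. {y. (x, y) \<in> E}"
  let ?col = "\<lambda>y. {x. (x, y) \<in> E}"
  have rng: "i < n" "j < m" using bireg_sub[OF b] ij by auto
  have fE: "finite E" using bireg_finite[OF b] .
  define X1 where "X1 = {(a, b) \<in> E. (i, b) \<in> E}"
  define X2 where "X2 = {(a, b) \<in> E. (a, j) \<in> E}"
  have cover: "E \<subseteq> good i j F E \<union> ({i} \<times> ?row i) \<union> (?col j \<times> {j}) \<union> X1 \<union> X2 \<union> F"
    unfolding good_def X1_def X2_def by auto
  have c1: "card ({i} \<times> ?row i) = d1" using bireg_row[OF b rng(1)] by (simp add: card_cartesian_product)
  have c2: "card (?col j \<times> {j}) = d2" using bireg_col[OF b rng(2)] by (simp add: card_cartesian_product)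
  have "X1 \<subseteq> (\<lambda>(b, a). (a, b)) ` (SIGMA b:?row i. ?col b)" unfolding X1_def by auto
  have fS: "finite (SIGMA b:?row i. ?col b)" using bireg_row_fin[OF b] bireg_col_fin[OF b] by auto
  then have "card X1 \<le> card ((\<lambda>(b, a). (a, b)) ` (SIGMA b:?row i. ?col b))"
    using \<open>X1 \<subseteq> _\<close> by (intro card_mono) auto
  also have "\<dots> \<le> card (SIGMA b:?row i. ?col b)" using fS by (rule card_image_le)
  also have "\<dots> = (\<Sum>b\<in>?row i. card (?col b))"
    by (rule card_SigmaI) (use bireg_row_fin[OF b] bireg_col_fin[OF b] in auto)
  also have "\<dots> = (\<Sum>b\<in>?row i. d2)"
  proof (rule sum.cong[OF refl])
    fix y assume "y \<in> ?row i" then have "y < m" using bireg_sub[OF b] by auto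
    then show "card (?col y) = d2" using bireg_col[OF b] by simp
  qed
  also have "\<dots> = d1 * d2" using bireg_row[OF b rng(1)] by simp
  finally have c3: "card X1 \<le> d1 * d2" .
  have "X2 \<subseteq> (SIGMA a:?col j. ?row a)" unfolding X2_def by auto
  then have "card X2 \<le> card (SIGMA a:?col j. ?row a)"
    by (rule card_mono[rotated]) (use bireg_row_fin[OF b] bireg_col_fin[OF b] in auto)
  also have "\<dots> = (\<Sum>a\<in>?col j. card (?row a))"
    by (rule card_SigmaI) (use bireg_row_fin[OF b] bireg_col_fin[OF b] in auto)
  also have "\<dots> = (\<Sum>a\<in>?col j. d1)"
  proof (rule sum.cong[OF refl])
    fix x assume "x \<in> ?col j" then have "x < n" using bireg_sub[OF b] by auto
    then show "card (?row x) = d1" using bireg_row[OF b] by simp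
  qed
  also have "\<dots> = d2 * d1" using bireg_col[OF b rng(2)] by simp
  finally have c4: "card X2 \<le> d1 * d2" by (simp add: mult.commute)
  have "n * d1 = card E" using bireg_card[OF b] by simp
  also have "\<dots> \<le> card (good i j F E \<union> ({i} \<times> ?row i) \<union> (?col j \<times> {j}) \<union> X1 \<union> X2 \<union> F)"
  proof (rule card_mono[OF _ cover])
    have "good i j F E \<subseteq> E" "X1 \<subseteq> E" "X2 \<subseteq> E" unfolding good_def X1_def X2_def by auto
    then have "finite (good i j F E)" "finite X1" "finite X2" using fE finite_subset by metis+
    then show "finite (good i j F E \<union> ({i} \<times> ?row i) \<union> (?col j \<times> {j}) \<union> X1 \<union> X2 \<union> F)"
      using F bireg_row_fin[OF b] bireg_col_fin[OF b] by simp
  qed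
  also have "\<dots> \<le> card (good i j F E) + card ({i} \<times> ?row i) + card (?col j \<times> {j}) + card X1 + card X2 + card F"
    by (meson add_mono_thms_linordered_semiring(3) card_Un_le order_trans)
  finally show ?thesis using c1 c2 c3 c4 F(2) by simp
qed


lemma sw_inj:
  assumes "(i, j) \<in> E"
  shows "inj_on (\<lambda>(a, b). sw i j E a b) (good i j F E)"
proof (rule inj_onI, clarify)
  fix a b a' b'
  assume g: "(a, b) \<in> good i j F E" "(a', b') \<in> good i j F E"
    and eq: "sw i j E a b = sw i j E a' b'"
  have "(i, b) \<in> sw i j E a' b'" "(a, j) \<in> sw i j E a' b'" using eq unfolding sw_def by auto
  then show "a = a' \<and> b = b'" using g unfolding sw_def good_def by auto
qed

definition unsw :: "nat \<Rightarrow> nat \<Rightarrow> (nat \<times> nat) set \<Rightarrow> nat \<times> nat \<Rightarrow> (nat \<times> nat) set" where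
  "unsw i j E' p = (E' - {(i, snd p), (fst p, j)}) \<union> {(i, j), p}"

lemma switch:
  assumes F: "(i, j) \<notin> F" "finite F" "card F \<le> K"
  shows "real (card {E \<in> biregular_graphs n m d1 d2. insert (i, j) F \<subseteq> E}) *
           (real n * d1 - (d1 + d2 + 2 * d1 * d2 + K))
         \<le> real (card {E \<in> biregular_graphs n m d1 d2. F \<subseteq> E}) * (d1 * d2)"
proof -
  let ?G = "biregular_graphs n m d1 d2"
  define A where "A = {E \<in> ?G. insert (i, j) F \<subseteq> E}"
  define B where "B = {E \<in> ?G. F \<subseteq> E \<and> (i, j) \<notin> E}"
  define c where "c = d1 + d2 + 2 * d1 * d2 + K"
  show ?thesis
  proof (cases "A = {}")
    case True
    then have "card A = 0" by simp
    then show ?thesis unfolding A_def[symmetric] by simp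
  next
    case False
    then obtain E0 where "E0 \<in> A" by auto
    then have rng: "i < n" "j < m" using bireg_sub[of n m d1 d2 E0]
      unfolding A_def biregular_graphs_def by auto
    have fA: "finite A" "finite B" unfolding A_def B_def using finite_graphs by auto
    define Rel where "Rel = (SIGMA E:A. (\<lambda>(a, b). sw i j E a b) ` good i j F E)"
    have fgood: "\<And>E. E \<in> A \<Longrightarrow> finite (good i j F E)"
    proof -
      fix E assume "E \<in> A"
      then have "finite E" using bireg_finite unfolding A_def biregular_graphs_def by auto
      then show "finite (good i j F E)" unfolding good_def
        by (rule finite_subset[rotated]) auto
    qed
    have "card Rel = (\<Sum>E\<in>A. card ((\<lambda>(a, b). sw i j E a b) ` good i j F E))"
      unfolding Rel_def using fA fgood by (intro card_SigmaI) auto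
    also have "\<dots> = (\<Sum>E\<in>A. card (good i j F E))"
    proof (rule sum.cong[OF refl])
      fix E assume "E \<in> A"
      then have "(i, j) \<in> E" unfolding A_def by auto
      then show "card ((\<lambda>(a, b). sw i j E a b) ` good i j F E) = card (good i j F E)"
        by (intro card_image sw_inj)
    qed
    finally have cR: "card Rel = (\<Sum>E\<in>A. card (good i j F E))" .
    have lower: "real (card A) * (real n * d1 - c) \<le> real (card Rel)"
    proof -
      have "real (card A) * (real n * d1 - c) = (\<Sum>E\<in>A. (real n * d1 - c))" by simp
      also have "\<dots> \<le> (\<Sum>E\<in>A. real (card (good i j F E)))"
      proof (rule sum_mono)
        fix E assume "E \<in> A"
        then have "biregular n m d1 d2 E" "(i, j) \<in> E" unfolding A_def biregular_graphs_def by auto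
        then have "n * d1 \<le> card (good i j F E) + c" unfolding c_def
          using good_card F by blast
        then have "real (n * d1) \<le> real (card (good i j F E)) + real c" by linarith
        then show "real n * d1 - c \<le> real (card (good i j F E))" by simp
      qed
      also have "\<dots> = real (card Rel)" using cR by simp
      finally show ?thesis .
    qed
    define pre where "pre E' = unsw i j E' ` ({a. (a, j) \<in> E'} \<times> {b. (i, b) \<in> E'})" for E'
    have sub: "(\<lambda>(x, y). (y, x)) ` Rel \<subseteq> (SIGMA E':B. pre E')"
    proof
      fix p assume "p \<in> (\<lambda>(x, y). (y, x)) ` Rel"
      then obtain E a b where E: "E \<in> A" and ab: "(a, b) \<in> good i j F E" and p: "p = (sw i j E a b, E)"
        unfolding Rel_def by auto
      have bE: "biregular n m d1 d2 E" "(i, j) \<in> E" "F \<subseteq> E" using E unfolding A_def biregular_graphs_def by auto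
      have g: "(a, b) \<in> E" "a \<noteq> i" "b \<noteq> j" "(i, b) \<notin> E" "(a, j) \<notin> E" "(a, b) \<notin> F"
        using ab unfolding good_def by auto
      let ?E' = "sw i j E a b"
      have "biregular n m d1 d2 ?E'" using sw_bireg[OF bE(1,2) g(1-5)] .
      moreover have "F \<subseteq> ?E'" "(i, j) \<notin> ?E'" using bE(3) F(1) g unfolding sw_def by auto
      ultimately have "?E' \<in> B" unfolding B_def biregular_graphs_def by auto
      moreover have "E \<in> pre ?E'"
      proof -
        have "(a, j) \<in> ?E'" "(i, b) \<in> ?E'" unfolding sw_def by auto
        moreover have "unsw i j ?E' (a, b) = E"
          unfolding unsw_def sw_def using g bE(2) by auto
        ultimately show ?thesis unfolding pre_def by force
      qed
      ultimately show "p \<in> (SIGMA E':B. pre E')" using p by simp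
    qed
    have fpre: "\<And>E'. E' \<in> B \<Longrightarrow> finite (pre E') \<and> card (pre E') \<le> d1 * d2"
    proof -
      fix E' assume "E' \<in> B"
      then have b: "biregular n m d1 d2 E'" unfolding B_def biregular_graphs_def by auto
      have f: "finite ({a. (a, j) \<in> E'} \<times> {b. (i, b) \<in> E'})"
        using bireg_row_fin[OF b] bireg_col_fin[OF b] by simp
      have "card (pre E') \<le> card ({a. (a, j) \<in> E'} \<times> {b. (i, b) \<in> E'})"
        unfolding pre_def using f by (rule card_image_le)
      also have "\<dots> = d2 * d1" using bireg_row[OF b rng(1)] bireg_col[OF b rng(2)]
        by (simp add: card_cartesian_product)
      finally show "finite (pre E') \<and> card (pre E') \<le> d1 * d2" using f unfolding pre_def
        by (simp add: mult.commute)
    qed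
    have "card Rel = card ((\<lambda>(x, y). (y, x)) ` Rel)"
      by (rule card_image[symmetric]) (auto simp: inj_on_def)
    also have "\<dots> \<le> card (SIGMA E':B. pre E')"
      by (rule card_mono[OF _ sub]) (use fA fpre in auto)
    also have "\<dots> = (\<Sum>E'\<in>B. card (pre E'))" using fA fpre by (intro card_SigmaI) auto
    also have "\<dots> \<le> (\<Sum>E'\<in>B. d1 * d2)" using fpre by (intro sum_mono) auto
    also have "\<dots> = card B * (d1 * d2)" by simp
    also have "\<dots> \<le> card {E \<in> ?G. F \<subseteq> E} * (d1 * d2)"
      by (intro mult_right_mono card_mono) (auto simp: B_def finite_graphs)
    finally have "real (card Rel) \<le> real (card {E \<in> ?G. F \<subseteq> E}) * (d1 * d2)"
      by (metis of_nat_le_iff of_nat_mult)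
    with lower show ?thesis unfolding A_def c_def by simp
  qed
qed


lemma edges_bound:
  fixes K d1 d2 n m :: nat
  defines "c \<equiv> real d1 + real d2 + 2 * real d1 * real d2 + real K"
  assumes "finite F" "card F \<le> K" and pos: "real n * d1 - c > 0"
  shows "real (card {E \<in> biregular_graphs n m d1 d2. F \<subseteq> E})
           \<le> (d1 * d2 / (real n * d1 - c)) ^ card F * card (biregular_graphs n m d1 d2)"
  using assms(2,3)
proof (induction F rule: finite_induct)
  case empty
  then show ?case by simp
next
  case (insert x F)
  let ?G = "biregular_graphs n m d1 d2"
  let ?q = "d1 * d2 / (real n * d1 - c)"
  obtain i j where x: "x = (i, j)" by (cases x)
  have cF: "card F \<le> K" using insert by simp
  have "real (card {E \<in> ?G. insert x F \<subseteq> E}) * (real n * d1 - c)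
        \<le> real (card {E \<in> ?G. F \<subseteq> E}) * (d1 * d2)"
    unfolding x c_def using switch[of i j F K n m d1 d2] insert(1,2) cF x by simp
  then have "real (card {E \<in> ?G. insert x F \<subseteq> E}) \<le> real (card {E \<in> ?G. F \<subseteq> E}) * ?q"
    using pos by (simp add: field_simps)
  also have "\<dots> \<le> (?q ^ card F * card ?G) * ?q"
    using insert(3)[OF cF] pos by (intro mult_right_mono) auto
  also have "\<dots> = ?q ^ card (insert x F) * card ?G" using insert(1,2) by simp
  finally show ?case .
qed

fun pe :: "nat + nat \<Rightarrow> nat + nat \<Rightarrow> nat \<times> nat" where
  "pe (Inl i) (Inr j) = (i, j)"
| "pe (Inr j) (Inl i) = (i, j)"
| "pe _ _ = (0, 0)"

lemma badj_pe: "badj E x y \<longleftrightarrow> badj UNIV x y \<and> pe x y \<in> E"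
  by (cases x; cases y) auto

lemma pe_inj:
  assumes "badj UNIV x y" "badj UNIV x' y'" "pe x y = pe x' y'"
  shows "(x = x' \<and> y = y') \<or> (x = y' \<and> y = x')"
  using assms by (cases x; cases y; cases x'; cases y') auto

definition edges :: "(nat + nat) list \<Rightarrow> (nat \<times> nat) set" where
  "edges c = (\<lambda>k. pe (c ! k) (c ! (Suc k mod length c))) ` {..<length c}"

definition Vset :: "nat \<Rightarrow> nat \<Rightarrow> (nat + nat) set" where
  "Vset n m = Inl ` {..<n} \<union> Inr ` {..<m}"

definition Cand :: "nat \<Rightarrow> nat \<Rightarrow> nat \<Rightarrow> (nat + nat) list set" where
  "Cand n m L = {c. set c \<subseteq> Vset n m \<and> 3 \<le> length c \<and> length c \<le> L \<and> distinct c \<and> cyc UNIV c}"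

lemma finite_Vset: "finite (Vset n m)" unfolding Vset_def by simp
lemma card_Vset: "card (Vset n m) = n + m"
  unfolding Vset_def by (subst card_Un_disjoint) (auto simp: card_image)

lemma finite_Cand: "finite (Cand n m L)"
proof -
  have "Cand n m L \<subseteq> {xs. set xs \<subseteq> Vset n m \<and> length xs \<le> L}" unfolding Cand_def by auto
  then show ?thesis by (rule finite_subset) (rule finite_lists_length_le[OF finite_Vset])
qed

lemma badj_in_V: "E \<subseteq> {..<n} \<times> {..<m} \<Longrightarrow> badj E x y \<Longrightarrow> x \<in> Vset n m"
  unfolding Vset_def by (cases x; cases y) auto

lemma scyc_eq:
  assumes "E \<subseteq> {..<n} \<times> {..<m}"
  shows "scyc E L = {c \<in> Cand n m L. edges c \<subseteq> E}"
proof (intro set_eqI iffI)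
  fix c assume c: "c \<in> scyc E L"
  then have cy: "cyc E c" "3 \<le> length c" "length c \<le> L" "distinct c" unfolding scyc_def by auto
  have "set c \<subseteq> Vset n m"
  proof
    fix x assume "x \<in> set c"
    then obtain k where k: "k < length c" "x = c ! k" by (auto simp: in_set_conv_nth)
    then show "x \<in> Vset n m" using cy(1) badj_in_V[OF assms] unfolding cyc_def by blast
  qed
  moreover have h: "\<And>k. k < length c \<Longrightarrow> badj UNIV (c ! k) (c ! (Suc k mod length c)) \<and>
      pe (c ! k) (c ! (Suc k mod length c)) \<in> E"
    using cy(1) badj_pe[of E] unfolding cyc_def by blast
  then have "cyc UNIV c" unfolding cyc_def by blast
  moreover have "edges c \<subseteq> E" unfolding edges_def using h by blast
  ultimately show "c \<in> {c \<in> Cand n m L. edges c \<subseteq> E}" unfolding Cand_def using cy by auto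
next
  fix c assume "c \<in> {c \<in> Cand n m L. edges c \<subseteq> E}"
  then have c: "c \<in> Cand n m L" "edges c \<subseteq> E" by auto
  then have "cyc E c" unfolding Cand_def cyc_def edges_def
    using badj_pe[of E] by auto
  then show "c \<in> scyc E L" using c(1) unfolding Cand_def scyc_def by auto
qed

lemma mod_two_contra:
  fixes k k' l :: nat
  assumes "3 \<le> l" "k < l" "k' < l" "k = Suc k' mod l" "k' = Suc k mod l"
  shows False
proof (cases "Suc k' < l")
  case True
  then have kk: "k = Suc k'" using assms(4) by simp
  show False
  proof (cases "Suc k < l")
    case True
    then have "k' = Suc k" using assms(5) by (metis mod_less)
    then show False using kk by linarith
  next
    case False
    then have "Suc k = l" using assms(2) by simp
    then have "k' = 0" using assms(5) by simp
    then show False using kk \<open>Suc k = l\<close> assms(1) by simp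
  qed
next
  case False
  then have "Suc k' = l" using assms(3) by simp
  then have "k = 0" using assms(4) by simp
  then have "k' = Suc 0" using assms(5,1) by simp
  then show False using \<open>Suc k' = l\<close> assms(1) by simp
qed

lemma card_edges:
  assumes "c \<in> Cand n m L"
  shows "card (edges c) = length c"
proof -
  let ?l = "length c"
  have c: "3 \<le> ?l" "distinct c" "cyc UNIV c" using assms unfolding Cand_def by auto
  have "inj_on (\<lambda>k. pe (c ! k) (c ! (Suc k mod ?l))) {..<?l}"
  proof (rule inj_onI)
    fix k k' assume k: "k \<in> {..<?l}" "k' \<in> {..<?l}"
      and eq: "pe (c ! k) (c ! (Suc k mod ?l)) = pe (c ! k') (c ! (Suc k' mod ?l))"
    have l0: "0 < ?l" using c(1) by linarith
    have m: "Suc k mod ?l < ?l" "Suc k' mod ?l < ?l" using l0 by simp_all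
    have "badj UNIV (c ! k) (c ! (Suc k mod ?l))" "badj UNIV (c ! k') (c ! (Suc k' mod ?l))"
      using c(3) k unfolding cyc_def by auto
    from pe_inj[OF this eq]
    show "k = k'"
    proof
      assume "c ! k = c ! k' \<and> c ! (Suc k mod ?l) = c ! (Suc k' mod ?l)"
      then show ?thesis using nth_eq_iff_index_eq[OF c(2)] k by auto
    next
      assume a: "c ! k = c ! (Suc k' mod ?l) \<and> c ! (Suc k mod ?l) = c ! k'"
      then have e1: "k = Suc k' mod ?l" and e2: "Suc k mod ?l = k'"
        using nth_eq_iff_index_eq[OF c(2)] k m by auto
      have kl: "k < ?l" "k' < ?l" using k by auto
      have False by (rule mod_two_contra[OF c(1) kl e1 e2[symmetric]])
      then show ?thesis ..
    qed
  qed
  then show ?thesis unfolding edges_def by (simp add: card_image)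
qed

lemma edges_disjoint:
  assumes "c \<in> Cand n m L" "c' \<in> Cand n m L" "set c \<inter> set c' = {}"
  shows "edges c \<inter> edges c' = {}"
proof -
  have cy: "cyc UNIV c" "cyc UNIV c'" "3 \<le> length c" "3 \<le> length c'" using assms unfolding Cand_def by auto
  {
    fix k k' assume k: "k < length c" "k' < length c'"
      and eq: "pe (c ! k) (c ! (Suc k mod length c)) = pe (c' ! k') (c' ! (Suc k' mod length c'))"
    have "badj UNIV (c ! k) (c ! (Suc k mod length c))" "badj UNIV (c' ! k') (c' ! (Suc k' mod length c'))"
      using cy k unfolding cyc_def by auto
    from pe_inj[OF this eq] have "c ! k = c' ! k' \<or> c ! k = c' ! (Suc k' mod length c')" by auto
    moreover have "Suc k' mod length c' < length c'" using cy(4) by (intro mod_less_divisor) linarith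
    then have "c ! k \<in> set c" "c' ! k' \<in> set c'" "c' ! (Suc k' mod length c') \<in> set c'"
      using k by auto
    ultimately have False using assms(3) by auto
  }
  then show ?thesis unfolding edges_def by (auto simp: eq_commute[of "pe (c' ! _) _"]) (metis)
qed


lemma sum_lists_weight:
  fixes q :: real
  assumes "finite V"
  shows "(\<Sum>c\<in>{xs. set xs \<subseteq> V \<and> length xs \<le> L}. q ^ length c) = (\<Sum>l\<le>L. (real (card V) * q) ^ l)"
proof -
  have eq: "{xs. set xs \<subseteq> V \<and> length xs \<le> L} = (\<Union>l\<in>{..L}. {xs. set xs \<subseteq> V \<and> length xs = l})"
    by auto
  have "(\<Sum>c\<in>{xs. set xs \<subseteq> V \<and> length xs \<le> L}. q ^ length c)
        = (\<Sum>l\<le>L. \<Sum>c\<in>{xs. set xs \<subseteq> V \<and> length xs = l}. q ^ length c)"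
    unfolding eq by (rule sum.UNION_disjoint) (auto intro: finite_lists_length_eq[OF assms])
  also have "\<dots> = (\<Sum>l\<le>L. \<Sum>c\<in>{xs. set xs \<subseteq> V \<and> length xs = l}. q ^ l)"
    by (intro sum.cong refl) auto
  also have "\<dots> = (\<Sum>l\<le>L. (real (card V) * q) ^ l)"
    by (simp add: card_lists_length_eq[OF assms] power_mult_distrib)
  finally show ?thesis .
qed

lemma Cand_weight:
  fixes q :: real
  assumes "q \<ge> 0"
  shows "(\<Sum>c\<in>Cand n m L. q ^ length c) \<le> (\<Sum>l\<le>L. (real (n + m) * q) ^ l)"
proof -
  have "(\<Sum>c\<in>Cand n m L. q ^ length c) \<le> (\<Sum>c\<in>{xs. set xs \<subseteq> Vset n m \<and> length xs \<le> L}. q ^ length c)"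
    by (rule sum_mono2) (use finite_lists_length_le[OF finite_Vset] assms in \<open>auto simp: Cand_def\<close>)
  also have "\<dots> = (\<Sum>l\<le>L. (real (n + m) * q) ^ l)"
    using sum_lists_weight[OF finite_Vset] card_Vset by simp
  finally show ?thesis .
qed

definition DC :: "nat \<Rightarrow> nat \<Rightarrow> nat \<Rightarrow> ((nat + nat) list \<times> (nat + nat) list) set" where
  "DC n m L = {p \<in> Cand n m L \<times> Cand n m L. set (fst p) \<inter> set (snd p) = {}}"

definition DP :: "(nat \<times> nat) set \<Rightarrow> nat \<Rightarrow> ((nat + nat) list \<times> (nat + nat) list) set" where
  "DP E L = {p \<in> scyc E L \<times> scyc E L. set (fst p) \<inter> set (snd p) = {}}"

lemma DP_eq:
  assumes "E \<subseteq> {..<n} \<times> {..<m}"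
  shows "DP E L = {p \<in> DC n m L. edges (fst p) \<union> edges (snd p) \<subseteq> E}"
  unfolding DP_def DC_def scyc_eq[OF assms] by auto

lemma finite_DC: "finite (DC n m L)"
  unfolding DC_def using finite_Cand by auto

lemma card_filter_sum: "finite A \<Longrightarrow> card {x \<in> A. P x} = (\<Sum>x\<in>A. if P x then 1 else 0)"
  by (simp add: sum.inter_filter[symmetric])

lemma pairs_sum:
  fixes n m d1 d2 L :: nat and c q :: real
  defines "c \<equiv> real d1 + real d2 + 2 * real d1 * real d2 + real (2 * L)"
  defines "q \<equiv> d1 * d2 / (real n * d1 - c)"
  assumes pos: "real n * d1 - c > 0"
  shows "(\<Sum>E\<in>biregular_graphs n m d1 d2. real (card (DP E L)))
         \<le> card (biregular_graphs n m d1 d2) * (\<Sum>c\<in>Cand n m L. q ^ length c) ^ 2"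
proof -
  let ?G = "biregular_graphs n m d1 d2"
  let ?F = "\<lambda>p. edges (fst p) \<union> edges (snd p)"
  have q0: "q \<ge> 0" unfolding q_def using pos by simp
  have "(\<Sum>E\<in>?G. real (card (DP E L))) = (\<Sum>E\<in>?G. \<Sum>p\<in>DC n m L. if ?F p \<subseteq> E then 1 else 0)"
  proof (rule sum.cong[OF refl])
    fix E assume "E \<in> ?G"
    then have "E \<subseteq> {..<n} \<times> {..<m}" unfolding biregular_graphs_def using bireg_sub by blast
    then have "DP E L = {p \<in> DC n m L. ?F p \<subseteq> E}" by (rule DP_eq)
    then have "card (DP E L) = (\<Sum>p\<in>DC n m L. if ?F p \<subseteq> E then 1 else 0)"
      using card_filter_sum[OF finite_DC, where P="\<lambda>p. ?F p \<subseteq> E"] by simp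
    then show "real (card (DP E L)) = (\<Sum>p\<in>DC n m L. if ?F p \<subseteq> E then 1 else 0)"
      by (simp add: if_distrib cong: if_cong)
  qed
  also have "\<dots> = (\<Sum>p\<in>DC n m L. \<Sum>E\<in>?G. if ?F p \<subseteq> E then 1 else 0)" by (rule sum.swap)
  also have "\<dots> = (\<Sum>p\<in>DC n m L. real (card {E \<in> ?G. ?F p \<subseteq> E}))"
    using card_filter_sum[OF finite_graphs] by (simp add: if_distrib cong: if_cong)
  also have "\<dots> \<le> (\<Sum>p\<in>DC n m L. q ^ length (fst p) * q ^ length (snd p) * card ?G)"
  proof (rule sum_mono)
    fix p assume p: "p \<in> DC n m L"
    then have pc: "fst p \<in> Cand n m L" "snd p \<in> Cand n m L" "set (fst p) \<inter> set (snd p) = {}"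
      unfolding DC_def by auto
    have fin: "finite (?F p)" unfolding edges_def by simp
    have "card (?F p) = length (fst p) + length (snd p)"
      using card_Un_disjoint[of "edges (fst p)" "edges (snd p)"] edges_disjoint[OF pc] card_edges pc
      unfolding edges_def by simp
    moreover have "length (fst p) \<le> L" "length (snd p) \<le> L" using pc unfolding Cand_def by auto
    ultimately have cF: "card (?F p) \<le> 2 * L" by simp
    have "real (card {E \<in> ?G. ?F p \<subseteq> E}) \<le> q ^ card (?F p) * card ?G"
      unfolding q_def c_def using edges_bound[OF fin cF] pos unfolding c_def by simp
    also have "\<dots> = q ^ length (fst p) * q ^ length (snd p) * card ?G"
      using \<open>card (?F p) = _\<close> by (simp add: power_add)
    finally show "real (card {E \<in> ?G. ?F p \<subseteq> E}) \<le> q ^ length (fst p) * q ^ length (snd p) * card ?G" .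
  qed
  also have "\<dots> \<le> (\<Sum>p\<in>Cand n m L \<times> Cand n m L. q ^ length (fst p) * q ^ length (snd p) * card ?G)"
    by (rule sum_mono2) (use finite_Cand q0 in \<open>auto simp: DC_def\<close>)
  also have "\<dots> = card ?G * ((\<Sum>c\<in>Cand n m L. q ^ length c) * (\<Sum>c\<in>Cand n m L. q ^ length c))"
    by (simp add: sum_product sum.cartesian_product sum_distrib_left mult_ac split_beta)
  finally show ?thesis by (simp add: power2_eq_square)
qed


lemma finite_scyc: "E \<subseteq> {..<n} \<times> {..<m} \<Longrightarrow> finite (scyc E L)"
  using scyc_eq[of E n m L] finite_Cand[of n m L] by simp

lemma bad_count:
  assumes b: "biregular n m d1 d2 E" and ge: "d2 \<le> d1"
  shows "card {i. i < n \<and> has_cycle_in E (ball_R E R (Inl i))} \<le> card (scyc E (2 * R)) * (1 + d1) ^ R"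
proof -
  let ?S = "scyc E (2 * R)"
  have nb: "\<And>x. finite {y. badj E x y} \<and> card {y. badj E x y} \<le> d1" using biregular_nbrs[OF b ge] by blast
  have fS: "finite ?S" using finite_scyc[OF bireg_sub[OF b]] .
  have sub: "{i. i < n \<and> has_cycle_in E (ball_R E R (Inl i))} \<subseteq> (\<Union>c\<in>?S. {i. Inl i \<in> ball_R E R (hd c)})"
  proof
    fix i assume "i \<in> {i. i < n \<and> has_cycle_in E (ball_R E R (Inl i))}"
    then obtain c where c: "3 \<le> length c" "length c \<le> 2 * R" "distinct c"
      "\<forall>k<length c. badj E (c ! k) (c ! (Suc k mod length c))" "set c \<subseteq> ball_R E R (Inl i)"
      using short_cycle by blast
    have cS: "c \<in> ?S" using c unfolding scyc_def cyc_def by auto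
    have "hd c \<in> set c" using c(1) by (cases c) auto
    then have "within_dist E R (Inl i) (hd c)" using c(5) unfolding ball_R_def by auto
    then have "Inl i \<in> ball_R E R (hd c)" unfolding ball_R_def using wd_sym by blast
    then show "i \<in> (\<Union>c\<in>?S. {i. Inl i \<in> ball_R E R (hd c)})" using cS by blast
  qed
  have each: "\<And>v. finite {i. Inl i \<in> ball_R E R v} \<and> card {i. Inl i \<in> ball_R E R v} \<le> (1 + d1) ^ R"
  proof -
    fix v
    have bc: "finite (ball_R E R v)" "card (ball_R E R v) \<le> (1 + d1) ^ R" using ball_card[OF nb] by auto
    have im: "Inl ` {i. Inl i \<in> ball_R E R v} \<subseteq> ball_R E R v" by auto
    have f: "finite {i. Inl i \<in> ball_R E R v}"
      using finite_imageD[OF finite_subset[OF im bc(1)]] by (simp add: inj_on_def)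
    have "card {i. Inl i \<in> ball_R E R v} = card ((Inl :: nat \<Rightarrow> nat + nat) ` {i. Inl i \<in> ball_R E R v})"
      by (rule card_image[symmetric]) (simp add: inj_on_def)
    also have "card ((Inl :: nat \<Rightarrow> nat + nat) ` {i. Inl i \<in> ball_R E R v}) \<le> card (ball_R E R v)" by (rule card_mono[OF bc(1) im])
    finally show "finite {i. Inl i \<in> ball_R E R v} \<and> card {i. Inl i \<in> ball_R E R v} \<le> (1 + d1) ^ R"
      using f bc by simp
  qed
  have "card {i. i < n \<and> has_cycle_in E (ball_R E R (Inl i))} \<le> card (\<Union>c\<in>?S. {i. Inl i \<in> ball_R E R (hd c)})"
    by (rule card_mono[OF _ sub]) (use fS each in auto)
  also have "\<dots> \<le> (\<Sum>c\<in>?S. card {i. Inl i \<in> ball_R E R (hd c)})" by (rule card_UN_le[OF fS])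
  also have "\<dots> \<le> (\<Sum>c\<in>?S. (1 + d1) ^ R)" by (rule sum_mono) (use each in blast)
  also have "\<dots> = card ?S * (1 + d1) ^ R" by simp
  finally show ?thesis .
qed

lemma DP_lower:
  assumes b: "biregular n m d1 d2 E" and ge: "d2 \<le> d1"
  shows "card (scyc E L) * card (scyc E L) \<le> card (DP E L) + card (scyc E L) * ((L + 1) * (1 + d1) ^ (4 * L * L))"
proof -
  let ?S = "scyc E L"
  let ?Z = "(L + 1) * (1 + d1) ^ (4 * L * L)"
  have nb: "\<And>x. finite {y. badj E x y} \<and> card {y. badj E x y} \<le> d1" using biregular_nbrs[OF b ge] by blast
  have fS: "finite ?S" using finite_scyc[OF bireg_sub[OF b]] .
  define M where "M = (SIGMA c:?S. {c' \<in> ?S. set c \<inter> set c' \<noteq> {}})"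
  have sub: "?S \<times> ?S \<subseteq> DP E L \<union> M" unfolding DP_def M_def by auto
  have fM: "finite M" unfolding M_def using fS by auto
  have fD: "finite (DP E L)" unfolding DP_def using fS by auto
  have "card M = (\<Sum>c\<in>?S. card {c' \<in> ?S. set c \<inter> set c' \<noteq> {}})"
    unfolding M_def using fS by (intro card_SigmaI) auto
  also have "\<dots> \<le> (\<Sum>c\<in>?S. ?Z)" using scyc_meet[OF nb] by (intro sum_mono) blast
  finally have cM: "card M \<le> card ?S * ?Z" by simp
  have "card ?S * card ?S = card (?S \<times> ?S)" by (simp add: card_cartesian_product)
  also have "\<dots> \<le> card (DP E L \<union> M)" by (rule card_mono[OF _ sub]) (use fM fD in simp)
  also have "\<dots> \<le> card (DP E L) + card M" by (rule card_Un_le)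
  finally show ?thesis using cM by simp
qed

lemma geom_le:
  fixes x y :: real
  assumes "0 \<le> x" "x \<le> y" "1 \<le> y"
  shows "(\<Sum>l\<le>L. x ^ l) \<le> (L + 1) * y ^ L"
proof -
  have "(\<Sum>l\<le>L. x ^ l) \<le> (\<Sum>l\<le>L. y ^ L)"
  proof (rule sum_mono)
    fix l assume "l \<in> {..L}"
    then have "x ^ l \<le> y ^ l" "y ^ l \<le> y ^ L" using assms by (auto intro: power_mono power_increasing)
    then show "x ^ l \<le> y ^ L" by simp
  qed
  then show ?thesis by (simp add: add.commute)
qed


lemma tau1_card:
  "real n - real (card (tau1 n E R)) = real (card {i. i < n \<and> has_cycle_in E (ball_R E R (Inl i))})"
proof -
  have "{..<n} = tau1 n E R \<union> {i. i < n \<and> has_cycle_in E (ball_R E R (Inl i))}"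
    unfolding tau1_def by auto
  moreover have "tau1 n E R \<inter> {i. i < n \<and> has_cycle_in E (ball_R E R (Inl i))} = {}"
    unfolding tau1_def by auto
  moreover have "finite (tau1 n E R)" "finite {i. i < n \<and> has_cycle_in E (ball_R E R (Inl i))}"
    unfolding tau1_def by auto
  ultimately have "n = card (tau1 n E R) + card {i. i < n \<and> has_cycle_in E (ball_R E R (Inl i))}"
    by (metis card_Un_disjoint card_lessThan)
  then show ?thesis by simp
qed

lemma main_bound:
  fixes n m d1 d2 R :: nat and L :: nat and Bz Z W :: real
  defines "L \<equiv> 2 * R"
  defines "Bz \<equiv> real ((1 + d1) ^ R)"
  defines "Z \<equiv> real ((L + 1) * (1 + d1) ^ (4 * L * L))"
  defines "W \<equiv> (real (L + 1) * (4 * real d1) ^ L) ^ 2"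
  assumes ed: "n * d1 = m * d2" and ge: "d2 \<le> d1" and d1: "1 \<le> d1" and n1: "1 \<le> n"
    and c1: "2 * (real d1 + real d2 + 2 * real d1 * real d2 + real (2 * L)) \<le> real n * d1"
    and c2: "2 * Z * Bz \<le> real n powr (3/4)"
  shows "prob_bireg n m d1 d2 (\<lambda>E. (real n - real (card (tau1 n E R))) / real n > real n powr (-1/4))
         \<le> 2 * Bz ^ 2 * W / real n powr (3/2)"
proof -
  let ?G = "biregular_graphs n m d1 d2"
  let ?P = "\<lambda>E. (real n - real (card (tau1 n E R))) / real n > real n powr (-1/4)"
  define c where "c = real d1 + real d2 + 2 * real d1 * real d2 + real (2 * L)"
  define q where "q = d1 * d2 / (real n * d1 - c)"
  have "real d1 \<ge> 1" using d1 by simp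
  moreover have "0 \<le> real d2 + 2 * real d1 * real d2 + real (2 * L)" by simp
  ultimately have cpos: "c \<ge> 1" unfolding c_def by linarith
  have c1': "2 * c \<le> real n * d1" using c1 unfolding c_def .
  have pos: "real n * d1 - c > 0" using c1' cpos by linarith
  have half: "real n * d1 - c \<ge> real n * d1 / 2" using c1' by linarith
  have q0: "q \<ge> 0" unfolding q_def using pos by simp
  have nr: "real n > 0" using n1 by simp
  have "q \<le> d1 * d2 / (real n * d1 / 2)" unfolding q_def
    using half pos nr d1 by (intro divide_left_mono) auto
  also have "\<dots> = 2 * d2 / real n" using d1 by (simp add: field_simps)
  finally have qle: "q \<le> 2 * d2 / real n" .
  have md: "real m * d2 = real n * d1" using ed by (metis of_nat_mult)
  have "real (n + m) * q \<le> real (n + m) * (2 * d2 / real n)" using qle by (intro mult_left_mono) auto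
  also have "\<dots> = 2 * d2 + 2 * (real m * d2) / real n" using nr by (simp add: field_simps)
  also have "\<dots> = 2 * d2 + 2 * d1" using md nr by simp
  also have "\<dots> \<le> 4 * real d1" using ge by simp
  finally have nmq: "real (n + m) * q \<le> 4 * real d1" .
  define sq where "sq = (\<Sum>c\<in>Cand n m L. q ^ length c)"
  have sq0: "sq \<ge> 0" unfolding sq_def using q0 by (intro sum_nonneg) auto
  have "sq \<le> (\<Sum>l\<le>L. (real (n + m) * q) ^ l)" unfolding sq_def by (rule Cand_weight[OF q0])
  also have "\<dots> \<le> real (L + 1) * (4 * real d1) ^ L"
    using geom_le[of "real (n + m) * q" "4 * real d1" L] q0 nmq d1 by (simp add: add.commute)
  finally have "sq ^ 2 \<le> W" unfolding W_def using sq0 by (intro power_mono) auto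
  then have sumDP: "(\<Sum>E\<in>?G. real (card (DP E L))) \<le> card ?G * W"
    using pairs_sum[of n d1 d2 L m] pos unfolding c_def q_def sq_def
    by (smt (verit, best) mult_left_mono of_nat_0_le_iff)
  define t where "t = real n powr (3/4)"
  have t0: "t > 0" unfolding t_def using nr by simp
  have Bz1: "Bz \<ge> 1" unfolding Bz_def by simp
  have Z0: "Z \<ge> 0" unfolding Z_def by simp
  define T where "T = (t / Bz) ^ 2 / 2"
  have T0: "T > 0" unfolding T_def using t0 Bz1 by simp
  have sub: "{E \<in> ?G. ?P E} \<subseteq> {E \<in> ?G. T \<le> real (card (DP E L))}"
  proof safe
    fix E assume EG: "E \<in> ?G" and PE: "?P E"
    then have b: "biregular n m d1 d2 E" unfolding biregular_graphs_def by simp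
    let ?X = "real (card {i. i < n \<and> has_cycle_in E (ball_R E R (Inl i))})"
    let ?s = "real (card (scyc E L))"
    have "?X / real n > real n powr (-1/4)" using PE tau1_card by metis
    then have "?X > real n powr (-1/4) * real n" using nr by (simp add: field_simps)
    also have "real n powr (-1/4) * real n = t"
    proof -
      have "real n powr (-1/4) * real n = real n powr (-1/4) * real n powr 1" using nr by simp
      also have "\<dots> = real n powr (-1/4 + 1)" by (rule powr_add[symmetric])
      finally show ?thesis unfolding t_def by simp
    qed
    finally have Xt: "?X > t" .
    have "?X \<le> ?s * Bz" using bad_count[OF b ge, of R] unfolding L_def Bz_def
      by (metis of_nat_le_iff of_nat_mult)
    then have "t < ?s * Bz" using Xt by simp
    then have st: "t / Bz < ?s" using Bz1 by (simp add: field_simps)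
    have "2 * Z \<le> t / Bz" using c2 Bz1 unfolding t_def by (simp add: field_simps)
    then have s2Z: "2 * Z \<le> ?s" using st by simp
    have "?s * ?s \<le> real (card (DP E L)) + ?s * Z"
      using DP_lower[OF b ge, of L] unfolding Z_def by (metis of_nat_add of_nat_le_iff of_nat_mult)
    moreover have "?s * Z \<le> ?s * (?s / 2)" using s2Z by (intro mult_left_mono) auto
    moreover have "?s * (?s / 2) = ?s * ?s / 2" by simp
    ultimately have "?s * ?s / 2 \<le> real (card (DP E L))" by simp
    moreover have "(t / Bz) ^ 2 \<le> ?s ^ 2" using st t0 Bz1 by (intro power_mono) auto
    moreover have "?s ^ 2 = ?s * ?s" by (simp add: power2_eq_square)
    ultimately show "T \<le> real (card (DP E L))" unfolding T_def by simp
  qed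
  have fG: "finite ?G" by (rule finite_graphs)
  have "real (card {E \<in> ?G. ?P E}) * T \<le> real (card {E \<in> ?G. T \<le> real (card (DP E L))}) * T"
    using card_mono[OF _ sub] fG T0 by (intro mult_right_mono) auto
  also have "\<dots> = (\<Sum>E\<in>{E \<in> ?G. T \<le> real (card (DP E L))}. T)" by simp
  also have "\<dots> \<le> (\<Sum>E\<in>{E \<in> ?G. T \<le> real (card (DP E L))}. real (card (DP E L)))"
    by (rule sum_mono) simp
  also have "\<dots> \<le> (\<Sum>E\<in>?G. real (card (DP E L)))" by (rule sum_mono2) (use fG in auto)
  also have "\<dots> \<le> card ?G * W" by (rule sumDP)
  finally have markov: "real (card {E \<in> ?G. ?P E}) * T \<le> card ?G * W" .
  have tt: "t ^ 2 = real n powr (3/2)"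
  proof -
    have "t ^ 2 = t * t" by (simp add: power2_eq_square)
    also have "\<dots> = real n powr (3/4 + 3/4)" unfolding t_def by (rule powr_add[symmetric])
    finally show ?thesis by simp
  qed
  show ?thesis
  proof (cases "card ?G = 0")
    case True
    have "W \<ge> 0" unfolding W_def by simp
    then show ?thesis unfolding prob_bireg_def using True by simp
  next
    case False
    then have G0: "real (card ?G) > 0" by simp
    have "prob_bireg n m d1 d2 ?P = real (card {E \<in> ?G. ?P E}) / card ?G" unfolding prob_bireg_def by simp
    also have "\<dots> \<le> W / T" using markov G0 T0 by (simp add: field_simps)
    also have "W / T = 2 * Bz ^ 2 * W / t ^ 2" unfolding T_def using Bz1 t0 by (simp add: field_simps)
    finally show ?thesis using tt by simp
  qed
qed


lemma d1_zero_prob: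
  "prob_bireg n m 0 d2 (\<lambda>E. (real n - real (card (tau1 n E R))) / real n > real n powr (-1/4)) = 0"
proof -
  let ?G = "biregular_graphs n m 0 d2"
  have e: "{E \<in> ?G. (real n - real (card (tau1 n E R))) / real n > real n powr (-1/4)} = {}"
  proof safe
    fix E assume EG: "E \<in> ?G" and P: "(real n - real (card (tau1 n E R))) / real n > real n powr (-1/4)"
    have b: "biregular n m 0 d2 E" using EG unfolding biregular_graphs_def by simp
    have "E = {}"
    proof (rule ccontr)
      assume "E \<noteq> {}"
      then obtain i j where ij: "(i, j) \<in> E" by auto
      then have "i < n" using bireg_sub[OF b] by auto
      then have "card {j. (i, j) \<in> E} = 0" using bireg_row[OF b] by simp
      then have "{j. (i, j) \<in> E} = {}" using bireg_row_fin[OF b, of i] by simp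
      then show False using ij by auto
    qed
    have nb: "\<not> badj E x y" for x y using \<open>E = {}\<close> by (cases x; cases y) auto
    have "\<not> has_cycle_in E S" for S
    proof
      assume "has_cycle_in E S"
      then obtain cs where "3 \<le> length cs" "\<forall>k<length cs. badj E (cs ! k) (cs ! (Suc k mod length cs))"
        unfolding has_cycle_in_def by blast
      then have "0 < length cs" by linarith
      then have "badj E (cs ! 0) (cs ! (Suc 0 mod length cs))"
        using \<open>\<forall>k<length cs. _\<close> by blast
      then show False using nb by blast
    qed
    then have "tau1 n E R = {..<n}" unfolding tau1_def by auto
    then have "real n - real (card (tau1 n E R)) = 0" by simp
    then have "(real n - real (card (tau1 n E R))) / real n = 0" by simp
    then have "real n powr (-1/4) < 0" using P by linarith
    moreover have "real n powr (-1/4) \<ge> 0" by simp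
    ultimately have False by linarith
    then show "E \<in> {}" ..
  qed
  show ?thesis unfolding prob_bireg_def e by simp
qed

lemma pointwise:
  fixes n m d1 d2 R :: nat and eps :: real and L K :: nat
  assumes Ldef: "L = 2 * R"
  assumes Kdef: "K = 4 * L * L + 2 * R + 2 * L + 1"
  assumes ed: "n * d1 = m * d2" and ge: "d2 \<le> d1" and n1: "1 \<le> n"
    and eps: "eps = 1 / (8 * real K)" and dn: "real d1 \<le> real n powr eps"
    and h3: "4 + 4 * real L \<le> real n - 4 * real n powr (1/8)"
    and h4: "2 * real (L + 1) * 2 ^ K \<le> real n powr (5/8)"
  shows "prob_bireg n m d1 d2 (\<lambda>E. (real n - real (card (tau1 n E R))) / real n > real n powr (-1/4))
         \<le> 2 * real (L + 1) ^ 2 * 4 ^ (2 * L) * 2 ^ K * real n powr (-11/8)"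
proof (cases "d1 = 0")
  case True
  then show ?thesis using d1_zero_prob[of n m d2 R] by simp
next
  case False
  then have d1: "1 \<le> d1" by simp
  have nr: "real n \<ge> 1" using n1 by simp
  have K1: "K \<ge> 1" unfolding Kdef by simp
  have eps18: "eps \<le> 1/8" using K1 unfolding eps by (simp add: field_simps)
  have eps0: "eps \<ge> 0" unfolding eps by simp
  have pe18: "real n powr eps \<le> real n powr (1/8)" using nr eps18 by (intro powr_mono) auto
  have pe1: "real n powr eps \<ge> 1" using nr eps0 by (simp add: ge_one_powr_ge_zero)
  define b where "b = 1 + real d1"
  have b1: "b \<ge> 1" unfolding b_def by simp
  have b2: "b \<le> 2 * real n powr eps" unfolding b_def using dn pe1 by simp
  have "b ^ K \<le> (2 * real n powr eps) ^ K" using b1 b2 by (intro power_mono) auto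
  also have "\<dots> = 2 ^ K * (real n powr eps) ^ K" by (simp add: power_mult_distrib)
  also have "(real n powr eps) ^ K = real n powr (real K * eps)" using nr by (intro powr_power) auto
  also have "real K * eps = 1/8" unfolding eps using K1 by simp
  finally have bK: "b ^ K \<le> 2 ^ K * real n powr (1/8)" .
  have bpow: "\<And>e. e \<le> K \<Longrightarrow> b ^ e \<le> b ^ K" using b1 by (intro power_increasing) auto
  have n18: "real n powr (1/8) \<ge> 0" by simp
  have "real d1 \<le> real n powr (1/8)" using dn pe18 by simp
  then have nbig: "4 + 4 * real d1 + 4 * real L \<le> real n" using h3 by simp
  have "2 * (real d1 + real d2 + 2 * real d1 * real d2 + real (2 * L)) \<le> real d1 * (4 + 4 * real d1 + 4 * real L)"
  proof -
    have "real d2 \<le> real d1" using ge by simp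
    moreover have "real d1 * real d2 \<le> real d1 * real d1" using ge by (intro mult_left_mono) auto
    moreover have "1 * real L \<le> real d1 * real L" using d1 by (intro mult_right_mono) auto
    ultimately show ?thesis by (simp add: algebra_simps)
  qed
  also have "\<dots> \<le> real d1 * real n" using nbig by (intro mult_left_mono) auto
  finally have c1: "2 * (real d1 + real d2 + 2 * real d1 * real d2 + real (2 * L)) \<le> real n * real d1"
    by (simp add: mult.commute)
  have "2 * real ((L + 1) * (1 + d1) ^ (4 * L * L)) * real ((1 + d1) ^ R) = 2 * real (L + 1) * b ^ (4 * L * L + R)"
    unfolding b_def by (simp add: power_add algebra_simps)
  also have "\<dots> \<le> 2 * real (L + 1) * b ^ K" using bpow[of "4 * L * L + R"] unfolding Kdef by simp
  also have "\<dots> \<le> 2 * real (L + 1) * (2 ^ K * real n powr (1/8))" using bK by simp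
  also have "\<dots> = (2 * real (L + 1) * 2 ^ K) * real n powr (1/8)" by simp
  also have "\<dots> \<le> real n powr (5/8) * real n powr (1/8)" using h4 n18 by (intro mult_right_mono) auto
  also have "\<dots> = real n powr (3/4)" by (simp add: powr_add[symmetric])
  finally have c2: "2 * real ((L + 1) * (1 + d1) ^ (4 * L * L)) * real ((1 + d1) ^ R) \<le> real n powr (3/4)" .
  have mb: "prob_bireg n m d1 d2 (\<lambda>E. (real n - real (card (tau1 n E R))) / real n > real n powr (-1/4))
         \<le> 2 * real ((1 + d1) ^ R) ^ 2 * (real (L + 1) * (4 * real d1) ^ L) ^ 2 / real n powr (3/2)"
    using main_bound[OF ed ge d1 n1 c1[unfolded Ldef] c2[unfolded Ldef]] unfolding Ldef by simp
  have "real ((1 + d1) ^ R) ^ 2 * (real (L + 1) * (4 * real d1) ^ L) ^ 2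
        = real (L + 1) ^ 2 * 4 ^ (2 * L) * (b ^ (2 * R) * real d1 ^ (2 * L))"
    unfolding b_def by (simp add: power_mult_distrib power_mult[symmetric] mult_ac)
  also have "\<dots> \<le> real (L + 1) ^ 2 * 4 ^ (2 * L) * b ^ K"
  proof -
    have "real d1 ^ (2 * L) \<le> b ^ (2 * L)" unfolding b_def by (intro power_mono) auto
    then have "b ^ (2 * R) * real d1 ^ (2 * L) \<le> b ^ (2 * R) * b ^ (2 * L)"
      using b1 by (intro mult_left_mono) auto
    also have "\<dots> = b ^ (2 * R + 2 * L)" by (simp add: power_add)
    also have "\<dots> \<le> b ^ K" using bpow[of "2 * R + 2 * L"] unfolding Kdef by simp
    finally show ?thesis by (intro mult_left_mono) auto
  qed
  also have "\<dots> \<le> real (L + 1) ^ 2 * 4 ^ (2 * L) * (2 ^ K * real n powr (1/8))"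
    using bK by (intro mult_left_mono) auto
  finally have bw: "real ((1 + d1) ^ R) ^ 2 * (real (L + 1) * (4 * real d1) ^ L) ^ 2
      \<le> real (L + 1) ^ 2 * 4 ^ (2 * L) * 2 ^ K * real n powr (1/8)" by (simp add: mult_ac)
  have n32: "real n powr (3/2) > 0" using nr by simp
  have "2 * real ((1 + d1) ^ R) ^ 2 * (real (L + 1) * (4 * real d1) ^ L) ^ 2 / real n powr (3/2)
        \<le> 2 * (real (L + 1) ^ 2 * 4 ^ (2 * L) * 2 ^ K * real n powr (1/8)) / real n powr (3/2)"
    using bw n32 by (simp add: divide_right_mono)
  also have "\<dots> = 2 * real (L + 1) ^ 2 * 4 ^ (2 * L) * 2 ^ K * (real n powr (1/8) / real n powr (3/2))"
    by simp
  also have "real n powr (1/8) / real n powr (3/2) = real n powr (-11/8)"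
    using nr by (simp add: powr_diff[symmetric])
  finally show ?thesis using mb by simp
qed


lemma prob_nonneg: "prob_bireg n m d1 d2 P \<ge> 0"
  unfolding prob_bireg_def by simp

theorem lemma5p1:
  fixes m d1 d2 :: "nat \<Rightarrow> nat" and R :: nat
  assumes edges: "\<And>n. n * d1 n = m n * d2 n"
    and ge: "\<And>n. d1 n \<ge> d2 n"
    and subpoly: "\<And>\<epsilon>::real. \<epsilon> > 0 \<Longrightarrow> (\<lambda>n. real (d1 n)) \<in> o(\<lambda>n. real n powr \<epsilon>)"
  shows "(\<lambda>n. prob_bireg n (m n) (d1 n) (d2 n)
            (\<lambda>E. (real n - real (card (tau1 n E R))) / real n > real n powr (-1/4)))
         \<in> o(\<lambda>n. real n powr (-5/4))"
proof -
  define L where "L = 2 * R"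
  define K where "K = 4 * L * L + 2 * R + 2 * L + 1"
  define eps :: real where "eps = 1 / (8 * real K)"
  define C :: real where "C = 2 * real (L + 1) ^ 2 * 4 ^ (2 * L) * 2 ^ K"
  have "K > 0" unfolding K_def by simp
  then have "real K > 0" by simp
  then have eps0: "eps > 0" unfolding eps_def by simp
  have "(\<lambda>n. real (d1 n)) \<in> o(\<lambda>n. real n powr eps)" using subpoly eps0 by blast
  from landau_o.smallD[OF this, of 1]
  have ev1: "eventually (\<lambda>n. real (d1 n) \<le> real n powr eps) at_top" by simp
  have ev2: "eventually (\<lambda>n::nat. 1 \<le> n) at_top" by (rule eventually_ge_at_top)
  have "filterlim (\<lambda>n::nat. real n - 4 * real n powr (1/8)) at_top at_top" by real_asymp
  then have ev3: "eventually (\<lambda>n::nat. 4 + 4 * real L \<le> real n - 4 * real n powr (1/8)) at_top"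
    unfolding filterlim_at_top by blast
  have "filterlim (\<lambda>n::nat. real n powr (5/8)) at_top at_top" by real_asymp
  then have ev4: "eventually (\<lambda>n::nat. 2 * real (L + 1) * 2 ^ K \<le> real n powr (5/8)) at_top"
    unfolding filterlim_at_top by blast
  let ?p = "\<lambda>n. prob_bireg n (m n) (d1 n) (d2 n)
            (\<lambda>E. (real n - real (card (tau1 n E R))) / real n > real n powr (-1/4))"
  have ev: "eventually (\<lambda>n. norm (?p n) \<le> C * norm (real n powr (-11/8))) at_top"
    using ev1 ev2 ev3 ev4
  proof eventually_elim
    case (elim n)
    have "?p n \<le> C * real n powr (-11/8)"
      unfolding C_def
      by (rule pointwise[OF L_def K_def edges ge elim(2) eps_def elim(1) elim(3) elim(4)])
    then show ?case using prob_nonneg by simp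
  qed
  then have "?p \<in> O(\<lambda>n. real n powr (-11/8))" by (rule bigoI)
  moreover have "(\<lambda>n::nat. real n powr (-11/8)) \<in> o(\<lambda>n. real n powr (-5/4))" by real_asymp
  ultimately show ?thesis by (rule landau_o.big_small_trans)
qed


end
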